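(* Let $\delta>0$ be the constant of the Local Ring Lemma and fix $M>0$. For every $\lambda<-1$ and $\alpha>0$ there exists $r=r(\lambda,\alpha)<\frac{\delta}{2}|\lambda|^{-4/3}$ such that for all sufficiently small $\eta>0$, with probability at least $1-\alpha$, for every point $x\in\mathbb{T}^2_M$ there is a square annulus $A_{R,2R}$ surrounding $x$ with $r/\delta\le R\le|\lambda|^{-4/3}$ on which the event $\mathcal{A}_{R,\lambda,\delta}$ holds.
   Context: $\omega^\lambda_\eta$ is near-critical site percolation on the periodic triangular lattice $\eta\mathsf{T}\cap\mathbb{T}^2_M$ (torus $\mathbb{T}^2_M=\mathbb{R}^2/(2M\mathbb{Z})^2$): Bernoulli site percolation of density $1/2+\mathrm{sgn}(\lambda)(1-e^{-|\lambda|r(\eta)})$, where $r(\eta)=\eta^2/\alpha_4(\eta,1)$ and $\alpha_4(\eta,1)$ is the critical alternating four-arm probability from the origin hexagon to distance $1$. For a square annulus $A_{R,2R}$ (between concentric squares of radii $R$ and $2R$), $\mathcal{A}_{R,\lambda,\delta}$ is the event that there exist open clusters $\mathcal{C}_1,\dots,\mathcal{C}_N$ of the restriction of $\omega^\lambda_\eta$ to $A_{R,2R}$ ($\mathcal{C}_{N+1}=\mathcal{C}_1$), each of diameter at least $\delta R$, and closed sites $y_i$ neighboring both $\mathcal{C}_i$ and $\mathcal{C}_{i+1}$, such that the two boundary components of $A_{R,2R}$ are disconnected in $A_{R,2R}\setminus\bigcup_i(\mathcal{C}_i\cup\{y_i\})$. The Local Ring Lemma provides $\delta>0$ such that for all $\lambda<-1$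 and $R\le|\lambda|^{-4/3}$, $\mathbf{P}[\mathcal{A}_{R,\lambda,\delta}]>1-1/100$ for all small $\eta$. "Surrounding $x$" means $x$ lies in the bounded component enclosed by the inner boundary. *)

theory Defs
  imports "HOL-Analysis.Analysis" "HOL-Probability.Probability"
begin

text \<open>A site (a,b) :: int \<times> int sits in row b at horizontal position a + 1/2 (b odd)
  or a (b even); rows are at height (sqrt 3 / 2) times b.  These are exactly the
  triangular lattice T (unit mesh); each site has six neighbours.\<close>

type_synonym site = "int \<times> int"

definition tri_adj :: "site \<Rightarrow> site \<Rightarrow> bool" where
  "tri_adj u v \<longleftrightarrow>
     (snd v = snd u \<and> \<bar>fst v - fst u\<bar> = 1) \<or>
     (\<bar>snd v - snd u\<bar> = 1 \<and>
        (fst v = fst u \<or> fst v = fst u + (if even (snd u) then -1 else 1)))"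

definition lattice_path :: "site set \<Rightarrow> site list \<Rightarrow> bool" where
  "lattice_path S \<gamma> \<longleftrightarrow> \<gamma> \<noteq> [] \<and> set \<gamma> \<subseteq> S \<and>
     (\<forall>i. Suc i < length \<gamma> \<longrightarrow> tri_adj (\<gamma> ! i) (\<gamma> ! Suc i))"

definition plane_pos :: "real \<Rightarrow> site \<Rightarrow> real \<times> real" where
  "plane_pos \<eta> z = (\<eta> * (real_of_int (fst z) + (if even (snd z) then 0 else 1/2)),
                     \<eta> * (sqrt 3 / 2) * real_of_int (snd z))"

text \<open>The six neighbours of the origin site, listed counterclockwise (angles 0,60,...,300 deg).\<close>
definition origin_nbrs :: "site list" where
  "origin_nbrs = [(1,0), (0,1), (-1,1), (-1,0), (-1,-1), (0,-1)]"

text \<open>Four alternating arms (open, closed, open, closed in counterclockwise order)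
  from the hexagon of the origin to Euclidean distance 1.  An arm is a lattice path
  avoiding the origin, starting at a neighbour of the origin, with all sites but the
  last at distance < 1 and the last one at distance \<ge> 1.  Arms are disjoint, and
  their starting neighbours are in counterclockwise order; arm i is open iff i is even.\<close>
definition four_arm_event :: "real \<Rightarrow> (site \<Rightarrow> bool) set" where
  "four_arm_event \<eta> = {\<omega>. \<exists>(\<gamma>::nat \<Rightarrow> site list) (k::nat \<Rightarrow> nat).
      strict_mono_on {..<4} k \<and> k 3 < 6 \<and>
      (\<forall>i<4. lattice_path (UNIV - {(0,0)}) (\<gamma> i) \<and>
              hd (\<gamma> i) = origin_nbrs ! k i \<and>
              (\<forall>z\<in>set (butlast (\<gamma> i)). norm (plane_pos \<eta> z) < 1) \<and>
              norm (plane_pos \<eta> (last (\<gamma> i))) \<ge> 1 \<and>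
              (\<forall>z\<in>set (\<gamma> i). \<omega> z = even i)) \<and>
      (\<forall>i<4. \<forall>j<4. i \<noteq> j \<longrightarrow> set (\<gamma> i) \<inter> set (\<gamma> j) = {})}"

text \<open>Sites relevant to the four-arm event (a finite set).\<close>
definition arm_sites :: "real \<Rightarrow> site set" where
  "arm_sites \<eta> = {z. norm (plane_pos \<eta> z) \<le> 1 + \<eta>}"

definition alpha4 :: "real \<Rightarrow> real" where
  "alpha4 \<eta> = measure_pmf.prob
     (Pi_pmf (arm_sites \<eta>) False (\<lambda>_. bernoulli_pmf (1/2))) (four_arm_event \<eta>)"

definition r_scale :: "real \<Rightarrow> real" where
  "r_scale \<eta> = \<eta>\<^sup>2 / alpha4 \<eta>"

definition near_crit_density :: "real \<Rightarrow> real \<Rightarrow> real" where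
  "near_crit_density lam \<eta> = 1/2 + sgn lam * (1 - exp (- \<bar>lam\<bar> * r_scale \<eta>))"

section \<open>Periodic lattice on the torus R^2/(2M Z)^2, lifted to the plane\<close>

text \<open>Number of columns / rows of the periodic lattice; rows are even in number so
  that the brick pattern is periodic.  The mesh is 2M/n_cols \<approx> \<eta> horizontally and
  2M/n_rows \<approx> \<eta> sqrt 3 / 2 vertically (an exact triangular lattice cannot be
  2M Z^2-periodic).\<close>
definition n_cols :: "real \<Rightarrow> real \<Rightarrow> int" where
  "n_cols M \<eta> = \<lceil>2 * M / \<eta>\<rceil>"

definition n_rows :: "real \<Rightarrow> real \<Rightarrow> int" where
  "n_rows M \<eta> = 2 * \<lceil>2 * M / (\<eta> * sqrt 3)\<rceil>"

text \<open>Position in R^2 (universal cover of the torus) of a site; 2M-periodic in both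
  directions under (a,b) \<mapsto> (a + n_cols, b) and (a,b) \<mapsto> (a, b + n_rows).\<close>
definition torus_pos :: "real \<Rightarrow> real \<Rightarrow> site \<Rightarrow> real \<times> real" where
  "torus_pos M \<eta> z =
     ((real_of_int (fst z) + (if even (snd z) then 0 else 1/2)) * (2 * M / real_of_int (n_cols M \<eta>)) - M,
      real_of_int (snd z) * (2 * M / real_of_int (n_rows M \<eta>)) - M)"

text \<open>True = open.\<close>
definition perc :: "real \<Rightarrow> real \<Rightarrow> real \<Rightarrow> (site \<Rightarrow> bool) pmf" where
  "perc M lam \<eta> =
     map_pmf (\<lambda>\<omega> z. \<omega> (fst z mod n_cols M \<eta>, snd z mod n_rows M \<eta>))
       (Pi_pmf ({0..<n_cols M \<eta>} \<times> {0..<n_rows M \<eta>}) False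
          (\<lambda>_. bernoulli_pmf (near_crit_density lam \<eta>)))"

definition sup_norm2 :: "real \<times> real \<Rightarrow> real" where
  "sup_norm2 p = max \<bar>fst p\<bar> \<bar>snd p\<bar>"

text \<open>x lies in the bounded component enclosed by the inner boundary of A_{R,2R}(c).\<close>
definition surrounds :: "real \<times> real \<Rightarrow> real \<Rightarrow> real \<times> real \<Rightarrow> bool" where
  "surrounds c R x \<longleftrightarrow> sup_norm2 (x - c) < R"

definition ann_sites :: "real \<Rightarrow> real \<Rightarrow> real \<times> real \<Rightarrow> real \<Rightarrow> site set" where
  "ann_sites M \<eta> c R = {z. R \<le> sup_norm2 (torus_pos M \<eta> z - c) \<and>
                            sup_norm2 (torus_pos M \<eta> z - c) \<le> 2 * R}"

definition is_cluster :: "site set \<Rightarrow> (site \<Rightarrow> bool) \<Rightarrow> site set \<Rightarrow> bool" where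
  "is_cluster A \<omega> C \<longleftrightarrow> C \<noteq> {} \<and> C \<subseteq> A \<and> (\<forall>z\<in>C. \<omega> z) \<and>
     (\<forall>u\<in>C. \<forall>v\<in>C. \<exists>\<gamma>. lattice_path C \<gamma> \<and> hd \<gamma> = u \<and> last \<gamma> = v) \<and>
     (\<forall>u\<in>C. \<forall>v\<in>A. \<omega> v \<and> tri_adj u v \<longrightarrow> v \<in> C)"

definition inner_bdry :: "real \<Rightarrow> real \<Rightarrow> real \<times> real \<Rightarrow> real \<Rightarrow> site set" where
  "inner_bdry M \<eta> c R = {z \<in> ann_sites M \<eta> c R.
      \<exists>w. tri_adj z w \<and> sup_norm2 (torus_pos M \<eta> w - c) < R}"

definition outer_bdry :: "real \<Rightarrow> real \<Rightarrow> real \<times> real \<Rightarrow> real \<Rightarrow> site set" where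
  "outer_bdry M \<eta> c R = {z \<in> ann_sites M \<eta> c R.
      \<exists>w. tri_adj z w \<and> sup_norm2 (torus_pos M \<eta> w - c) > 2 * R}"

definition separates :: "real \<Rightarrow> real \<Rightarrow> real \<times> real \<Rightarrow> real \<Rightarrow> site set \<Rightarrow> bool" where
  "separates M \<eta> c R U \<longleftrightarrow>
     \<not> (\<exists>\<gamma>. lattice_path (ann_sites M \<eta> c R - U) \<gamma> \<and>
            hd \<gamma> \<in> inner_bdry M \<eta> c R \<and> last \<gamma> \<in> outer_bdry M \<eta> c R)"

text \<open>The event \<A>_{R,\<lambda>,\<delta>} for the annulus A_{R,2R} centred at c (it depends on \<lambda>
  only through the law of \<omega>).\<close>
definition ring_event :: "real \<Rightarrow> real \<Rightarrow> real \<times> real \<Rightarrow> real \<Rightarrow> real \<Rightarrow> (site \<Rightarrow> bool) set" where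
  "ring_event M \<eta> c R \<delta> = {\<omega>. \<exists>(N::nat) (C::nat \<Rightarrow> site set) (y::nat \<Rightarrow> site).
      N \<ge> 1 \<and>
      (\<forall>i<N. is_cluster (ann_sites M \<eta> c R) \<omega> (C i) \<and>
              diameter (torus_pos M \<eta> ` C i) \<ge> \<delta> * R \<and>
              \<not> \<omega> (y i) \<and>
              (\<exists>u\<in>C i. tri_adj u (y i)) \<and>
              (\<exists>u\<in>C (Suc i mod N). tri_adj u (y i))) \<and>
      separates M \<eta> c R (\<Union>i<N. C i \<union> {y i})}"

end

theory Submission
  imports Defs
begin


lemma prob_pair_times:
  "measure_pmf.prob (pair_pmf M N) (A \<times> B) = measure_pmf.prob M A * measure_pmf.prob N B"
proof -
  have "measure_pmf.prob (pair_pmf M N) (A \<times> B) = measure_pmf.prob (pair_pmf M N) ((A \<times> B) \<inter> set_pmf (pair_pmf M N))"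
    by (rule measure_Int_set_pmf[symmetric])
  also have "(A \<times> B) \<inter> set_pmf (pair_pmf M N) = (A \<inter> set_pmf M) \<times> (B \<inter> set_pmf N)" by auto
  also have "measure_pmf.prob (pair_pmf M N) \<dots> = measure_pmf.prob M (A \<inter> set_pmf M) * measure_pmf.prob N (B \<inter> set_pmf N)"
    by (intro measure_pmf_prob_product) auto
  finally show ?thesis by (simp add: measure_Int_set_pmf)
qed

lemma indep2_Pi_pmf:
  assumes fin: "finite T" and DT: "D \<subseteq> T"
    and PA: "\<And>w w'. (\<forall>z\<in>D. w z = w' z) \<Longrightarrow> PA w = PA w'"
    and PB: "\<And>w w'. (\<forall>z\<in>T - D. w z = w' z) \<Longrightarrow> PB w = PB w'"
  shows "measure_pmf.prob (Pi_pmf T d p) {w. PA w \<and> PB w} =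
         measure_pmf.prob (Pi_pmf T d p) {w. PA w} * measure_pmf.prob (Pi_pmf T d p) {w. PB w}"
proof -
  let ?h = "\<lambda>(f,g) x. if x \<in> D then f x else g x"
  have finD: "finite D" "finite (T - D)" using fin DT finite_subset by auto
  have TT: "T = D \<union> (T - D)" using DT by auto
  have U: "Pi_pmf T d p = map_pmf ?h (pair_pmf (Pi_pmf D d p) (Pi_pmf (T - D) d p))"
    using Pi_pmf_union[of D "T - D" d p] finD TT by auto
  have hA: "PA (\<lambda>x. if x \<in> D then f x else g x) = PA f" for f g by (rule PA) auto
  have hB: "PB (\<lambda>x. if x \<in> D then f x else g x) = PB g" for f g by (rule PB) auto
  have e1: "measure_pmf.prob (Pi_pmf T d p) {w. PA w \<and> PB w} =
      measure_pmf.prob (pair_pmf (Pi_pmf D d p) (Pi_pmf (T - D) d p)) ({f. PA f} \<times> {g. PB g})"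
    unfolding U measure_map_pmf by (intro arg_cong[where f="measure _"]) (auto simp: hA hB)
  have e2: "measure_pmf.prob (Pi_pmf T d p) {w. PA w} =
      measure_pmf.prob (pair_pmf (Pi_pmf D d p) (Pi_pmf (T - D) d p)) ({f. PA f} \<times> UNIV)"
    unfolding U measure_map_pmf by (intro arg_cong[where f="measure _"]) (auto simp: hA)
  have e3: "measure_pmf.prob (Pi_pmf T d p) {w. PB w} =
      measure_pmf.prob (pair_pmf (Pi_pmf D d p) (Pi_pmf (T - D) d p)) (UNIV \<times> {g. PB g})"
    unfolding U measure_map_pmf by (intro arg_cong[where f="measure _"]) (auto simp: hB)
  show ?thesis unfolding e1 e2 e3 prob_pair_times by simp
qed

lemma indep_Pi_pmf:
  "finite T \<Longrightarrow> (\<And>j. j < (k::nat) \<Longrightarrow> D j \<subseteq> T) \<Longrightarrow>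
    (\<And>i j. i < k \<Longrightarrow> j < k \<Longrightarrow> i \<noteq> j \<Longrightarrow> D i \<inter> D j = {}) \<Longrightarrow>
    (\<And>j w w'. j < k \<Longrightarrow> (\<forall>z\<in>D j. w z = w' z) \<Longrightarrow> P j w = P j w') \<Longrightarrow>
   measure_pmf.prob (Pi_pmf T d p) {w. \<forall>j<k. P j w} =
         (\<Prod>j<k. measure_pmf.prob (Pi_pmf T d p) {w. P j w})"
proof (induction k)
  case 0
  then show ?case by simp
next
  case (Suc k)
  have IH: "measure_pmf.prob (Pi_pmf T d p) {w. \<forall>j<k. P j w} =
         (\<Prod>j<k. measure_pmf.prob (Pi_pmf T d p) {w. P j w})"
    using Suc.prems by (intro Suc.IH) auto
  have eq: "{w. \<forall>j<Suc k. P j w} = {w. (\<forall>j<k. P j w) \<and> P k w}"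
    using less_Suc_eq by auto
  have "measure_pmf.prob (Pi_pmf T d p) {w. (\<forall>j<k. P j w) \<and> P k w} =
        measure_pmf.prob (Pi_pmf T d p) {w. \<forall>j<k. P j w} * measure_pmf.prob (Pi_pmf T d p) {w. P k w}"
  proof (rule indep2_Pi_pmf[OF Suc.prems(1), where D="\<Union>j<k. D j"])
    show "(\<Union>j<k. D j) \<subseteq> T" using Suc.prems(2) by (meson UN_least less_SucI lessThan_iff)
    show "(\<forall>j<k. P j w) = (\<forall>j<k. P j w')" if "\<forall>z\<in>\<Union>j<k. D j. w z = w' z" for w w'
      using that Suc.prems(4) by (metis UN_I lessThan_iff less_SucI)
    show "P k w = P k w'" if "\<forall>z\<in>T - (\<Union>j<k. D j). w z = w' z" for w w'
    proof (rule Suc.prems(4))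
      show "k < Suc k" by simp
      show "\<forall>z\<in>D k. w z = w' z"
      proof
        fix z assume z: "z \<in> D k"
        have "z \<in> T" using z Suc.prems(2) by auto
        moreover have "z \<notin> (\<Union>j<k. D j)" proof
          assume "z \<in> (\<Union>j<k. D j)"
          then obtain j where "j < k" "z \<in> D j" by auto
          then show False using z Suc.prems(3)[of k j] by auto
        qed
        ultimately show "w z = w' z" using that by auto
      qed
    qed
  qed
  then show ?case using IH eq by simp
qed



lemma even_n_rows: "even (n_rows M \<eta>)" by (simp add: n_rows_def)

lemma tp_shift:
  assumes "n_cols M \<eta> \<noteq> 0" "n_rows M \<eta> \<noteq> 0"
  shows "torus_pos M \<eta> (fst z + n_cols M \<eta> * p, snd z + n_rows M \<eta> * q) =
         torus_pos M \<eta> z + (2 * M * of_int p, 2 * M * of_int q)"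
proof -
  have ev: "even (snd z + n_rows M \<eta> * q) = even (snd z)" using even_n_rows[of M \<eta>] by auto
  have a: "(real_of_int (fst z + n_cols M \<eta> * p) + c) * (2 * M / real_of_int (n_cols M \<eta>)) - M
        = (real_of_int (fst z) + c) * (2 * M / real_of_int (n_cols M \<eta>)) - M + 2 * M * of_int p" for c
    using assms(1) by (simp add: field_simps)
  have b: "real_of_int (snd z + n_rows M \<eta> * q) * (2 * M / real_of_int (n_rows M \<eta>)) - M
        = real_of_int (snd z) * (2 * M / real_of_int (n_rows M \<eta>)) - M + 2 * M * of_int q"
    using assms(2) by (simp add: field_simps)
  show ?thesis unfolding torus_pos_def using a b ev by simp
qed

lemma adj_shift:
  assumes "even Y"
  shows "tri_adj (fst u + X, snd u + Y) (fst v + X, snd v + Y) = tri_adj u v"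
proof -
  have "even (snd u + Y) = even (snd u)" using assms by auto
  then show ?thesis unfolding tri_adj_def by auto
qed

lemma sup_norm2_triangle: "sup_norm2 (a + b) \<le> sup_norm2 a + sup_norm2 b"
  unfolding sup_norm2_def by (cases a; cases b) auto

lemma sup_norm2_minus: "sup_norm2 (a - b) = sup_norm2 (b - a)"
  unfolding sup_norm2_def by (cases a; cases b) auto

lemma adj_disp:
  assumes "tri_adj u v" "n_cols M \<eta> > 0" "n_rows M \<eta> > 0" "M > 0"
  shows "\<bar>fst (torus_pos M \<eta> v - torus_pos M \<eta> u)\<bar> \<le> 2 * M / n_cols M \<eta>"
    and "\<bar>snd (torus_pos M \<eta> v - torus_pos M \<eta> u)\<bar> \<le> 2 * M / n_rows M \<eta>"
proof -
  define sx where "sx = 2 * M / real_of_int (n_cols M \<eta>)"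
  define sy where "sy = 2 * M / real_of_int (n_rows M \<eta>)"
  have sx: "sx > 0" "sy > 0" using assms by (auto simp: sx_def sy_def)
  obtain a b where u: "u = (a,b)" by (cases u)
  obtain a' b' where v: "v = (a',b')" by (cases v)
  have f: "fst (torus_pos M \<eta> v - torus_pos M \<eta> u) =
     (real_of_int a' - real_of_int a + ((if even b' then 0 else 1/2) - (if even b then 0 else 1/2))) * sx"
    unfolding torus_pos_def u v sx_def by (simp add: algebra_simps)
  have s: "snd (torus_pos M \<eta> v - torus_pos M \<eta> u) = (real_of_int b' - real_of_int b) * sy"
    unfolding torus_pos_def u v sy_def by (simp add: algebra_simps diff_divide_distrib)
  have adj: "(b' = b \<and> \<bar>a' - a\<bar> = 1) \<or> (\<bar>b' - b\<bar> = 1 \<and> (a' = a \<or> a' = a + (if even b then -1 else 1)))"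
    using assms(1) unfolding tri_adj_def u v by simp
  have "\<bar>real_of_int a' - real_of_int a + ((if even b' then 0 else 1/2) - (if even b then 0 else 1/2))\<bar> \<le> 1"
  proof (cases "b' = b")
    case True
    then have "\<bar>a' - a\<bar> = 1" using adj by auto
    then have "\<bar>real_of_int a' - real_of_int a\<bar> = 1" by linarith
    then show ?thesis using True by simp
  next
    case False
    then have bb: "\<bar>b' - b\<bar> = 1" and aa: "a' = a \<or> a' = a + (if even b then -1 else 1)" using adj by auto
    have "b' = b + 1 \<or> b' = b - 1" using bb by linarith
    then have par: "even b' = odd b" by auto
    show ?thesis using aa par by (cases "even b") auto
  qed
  then show "\<bar>fst (torus_pos M \<eta> v - torus_pos M \<eta> u)\<bar> \<le> 2 * M / n_cols M \<eta>"
    unfolding f sx_def[symmetric] using sx by (simp add: abs_mult mult_le_cancel_right1)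
  have "\<bar>real_of_int b' - real_of_int b\<bar> \<le> 1" using adj by (auto; linarith)
  then show "\<bar>snd (torus_pos M \<eta> v - torus_pos M \<eta> u)\<bar> \<le> 2 * M / n_rows M \<eta>"
    unfolding s sy_def[symmetric] using sx by (simp add: abs_mult mult_le_cancel_right1)
qed



lemma sup_norm2_diff: "sup_norm2 a \<le> sup_norm2 b + sup_norm2 (a - b)"
  using sup_norm2_triangle[of b "a - b"] by simp

lemma adj_near:
  assumes "tri_adj u v" "n_cols M \<eta> > 0" "n_rows M \<eta> > 0" "M > 0"
    "2 * M / n_cols M \<eta> \<le> h" "2 * M / n_rows M \<eta> \<le> h"
  shows "sup_norm2 (torus_pos M \<eta> v - torus_pos M \<eta> u) \<le> h"
  using adj_disp[OF assms(1-4)] assms(5,6) unfolding sup_norm2_def by auto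

lemma cluster_local:
  assumes "is_cluster A \<omega> C" "\<And>z. z \<in> A \<Longrightarrow> \<omega> z = \<omega>' z"
  shows "is_cluster A \<omega>' C"
  using assms unfolding is_cluster_def by (metis subsetD)

lemma ring_local:
  assumes pos: "n_cols M \<eta> > 0" "n_rows M \<eta> > 0" "M > 0"
    and h: "2 * M / n_cols M \<eta> \<le> h" "2 * M / n_rows M \<eta> \<le> h"
    and agree: "\<And>z. R - h \<le> sup_norm2 (torus_pos M \<eta> z - c) \<Longrightarrow>
                    sup_norm2 (torus_pos M \<eta> z - c) \<le> 2 * R + h \<Longrightarrow> \<omega> z = \<omega>' z"
    and ev: "\<omega> \<in> ring_event M \<eta> c R \<delta>"
  shows "\<omega>' \<in> ring_event M \<eta> c R \<delta>"
proof -
  have h0: "h \<ge> 0" using h pos by (smt (verit) divide_pos_pos of_int_0_less_iff)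
  obtain N C y where N: "N \<ge> 1" and
    cl: "\<And>i. i < N \<Longrightarrow> is_cluster (ann_sites M \<eta> c R) \<omega> (C i) \<and>
              diameter (torus_pos M \<eta> ` C i) \<ge> \<delta> * R \<and> \<not> \<omega> (y i) \<and>
              (\<exists>u\<in>C i. tri_adj u (y i)) \<and> (\<exists>u\<in>C (Suc i mod N). tri_adj u (y i))"
    and sep: "separates M \<eta> c R (\<Union>i<N. C i \<union> {y i})"
    using ev unfolding ring_event_def by blast
  have inA: "\<omega> z = \<omega>' z" if "z \<in> ann_sites M \<eta> c R" for z
    using that h0 by (intro agree) (auto simp: ann_sites_def)
  have iny: "\<omega> v = \<omega>' v" if "tri_adj u v" "u \<in> ann_sites M \<eta> c R" for u v
  proof (rule agree)
    have d1: "sup_norm2 (torus_pos M \<eta> v - torus_pos M \<eta> u) \<le> h"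
      using adj_near[OF that(1) pos h] .
    have d2: "sup_norm2 (torus_pos M \<eta> u - torus_pos M \<eta> v) \<le> h"
      using d1 sup_norm2_minus by metis
    have "sup_norm2 (torus_pos M \<eta> v - c) \<le> sup_norm2 (torus_pos M \<eta> u - c) + sup_norm2 ((torus_pos M \<eta> v - c) - (torus_pos M \<eta> u - c))"
      by (rule sup_norm2_diff)
    moreover have "sup_norm2 (torus_pos M \<eta> u - c) \<le> sup_norm2 (torus_pos M \<eta> v - c) + sup_norm2 ((torus_pos M \<eta> u - c) - (torus_pos M \<eta> v - c))"
      by (rule sup_norm2_diff)
    ultimately show "R - h \<le> sup_norm2 (torus_pos M \<eta> v - c)" "sup_norm2 (torus_pos M \<eta> v - c) \<le> 2 * R + h"
      using d1 d2 that(2) unfolding ann_sites_def by auto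
  qed
  have "\<forall>i<N. is_cluster (ann_sites M \<eta> c R) \<omega>' (C i) \<and>
              diameter (torus_pos M \<eta> ` C i) \<ge> \<delta> * R \<and> \<not> \<omega>' (y i) \<and>
              (\<exists>u\<in>C i. tri_adj u (y i)) \<and> (\<exists>u\<in>C (Suc i mod N). tri_adj u (y i))"
  proof (intro allI impI conjI)
    fix i assume i: "i < N"
    note c = cl[OF i]
    show "is_cluster (ann_sites M \<eta> c R) \<omega>' (C i)" using c inA cluster_local by blast
    show "diameter (torus_pos M \<eta> ` C i) \<ge> \<delta> * R" using c by blast
    show "\<exists>u\<in>C i. tri_adj u (y i)" using c by blast
    show "\<exists>u\<in>C (Suc i mod N). tri_adj u (y i)" using c by blast
    obtain u where u: "u \<in> C i" "tri_adj u (y i)" using c by blast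
    have "u \<in> ann_sites M \<eta> c R" using u c unfolding is_cluster_def by blast
    then show "\<not> \<omega>' (y i)" using iny[OF u(2)] c by simp
  qed
  then show ?thesis using N sep unfolding ring_event_def by blast
qed



lemma diameter_translate: "diameter ((\<lambda>x. x + d) ` S) = diameter (S :: (real \<times> real) set)"
proof -
  have b: "bounded ((\<lambda>x. x + d) ` S) \<longleftrightarrow> bounded S"
  proof
    assume "bounded ((\<lambda>x. x + d) ` S)"
    then have "bounded ((\<lambda>x. x + (- d)) ` ((\<lambda>x. x + d) ` S))"
      using bounded_translation[of _ "-d"] by (simp add: add.commute)
    moreover have "(\<lambda>x. x + (- d)) ` ((\<lambda>x. x + d) ` S) = S" by (simp add: image_image)
    ultimately show "bounded S" by simp
  next
    assume "bounded S" then show "bounded ((\<lambda>x. x + d) ` S)"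
      using bounded_translation[of _ d] by (simp add: add.commute)
  qed
  have i: "(\<lambda>(x,y). dist x y) ` (((\<lambda>x. x + d) ` S) \<times> ((\<lambda>x. x + d) ` S)) = (\<lambda>(x,y). dist x y) ` (S \<times> S)"
  proof -
    have "((\<lambda>x. x + d) ` S) \<times> ((\<lambda>x. x + d) ` S) = (\<lambda>(x,y). (x + d, y + d)) ` (S \<times> S)" by auto
    then show ?thesis by (simp add: image_image dist_norm case_prod_unfold)
  qed
  show ?thesis unfolding diameter_def b i by simp
qed

lemma ring_shift:
  assumes nz: "n_cols M \<eta> \<noteq> 0" "n_rows M \<eta> \<noteq> 0"
    and per: "\<And>z. \<omega> (fst z + n_cols M \<eta> * p, snd z + n_rows M \<eta> * q) = \<omega> z"
    and ev: "\<omega> \<in> ring_event M \<eta> c R \<delta>"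
  shows "\<omega> \<in> ring_event M \<eta> (c + (2 * M * of_int p, 2 * M * of_int q)) R \<delta>"
proof -
  define nc where "nc = n_cols M \<eta>"
  define nr where "nr = n_rows M \<eta>"
  define d where "d = (2 * M * of_int p, 2 * M * (of_int q :: real))"
  define \<sigma> where "\<sigma> z = (fst z + nc * p, snd z + nr * q)" for z :: site
  define \<tau> where "\<tau> z = (fst z + nc * (-p), snd z + nr * (-q))" for z :: site
  let ?tp = "torus_pos M \<eta>"
  have evr: "even nr" unfolding nr_def by (rule even_n_rows)
  have st: "\<sigma> (\<tau> z) = z" "\<tau> (\<sigma> z) = z" for z unfolding \<sigma>_def \<tau>_def by (auto simp: algebra_simps)
  have tps: "?tp (\<sigma> z) = ?tp z + d" for z unfolding \<sigma>_def d_def nc_def nr_def by (rule tp_shift[OF nz])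
  have tpt: "?tp (\<tau> z) = ?tp z - d" for z
    unfolding \<tau>_def d_def nc_def nr_def using tp_shift[OF nz, of z "-p" "-q"] by simp
  have K1: "?tp (\<sigma> z) - (c + d) = ?tp z - c" for z using tps by (simp add: algebra_simps)
  have K2: "?tp (\<tau> z) - c = ?tp z - (c + d)" for z using tpt by (simp add: algebra_simps)
  have adjs: "tri_adj (\<sigma> u) (\<sigma> v) = tri_adj u v" for u v
    unfolding \<sigma>_def using adj_shift[of "nr * q" u "nc * p" v] evr by simp
  have adjt: "tri_adj (\<tau> u) (\<tau> v) = tri_adj u v" for u v
    unfolding \<tau>_def using adj_shift[of "nr * (-q)" u "nc * (-p)" v] evr by simp
  have M1: "\<sigma> z \<in> ann_sites M \<eta> (c + d) R \<longleftrightarrow> z \<in> ann_sites M \<eta> c R" for z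
    unfolding ann_sites_def mem_Collect_eq K1 by (rule refl)
  have M2: "\<tau> z \<in> ann_sites M \<eta> c R \<longleftrightarrow> z \<in> ann_sites M \<eta> (c + d) R" for z
    unfolding ann_sites_def mem_Collect_eq K2 by (rule refl)
  have inn: "\<tau> z \<in> inner_bdry M \<eta> c R" if zin: "z \<in> inner_bdry M \<eta> (c + d) R" for z
  proof -
    obtain w where w: "tri_adj z w" "sup_norm2 (?tp w - (c + d)) < R" "z \<in> ann_sites M \<eta> (c + d) R"
      using zin unfolding inner_bdry_def by blast
    have "tri_adj (\<tau> z) (\<tau> w)" using w(1) adjt by simp
    moreover have "sup_norm2 (?tp (\<tau> w) - c) < R" unfolding K2 using w(2) by simp
    moreover have "\<tau> z \<in> ann_sites M \<eta> c R" using w(3) M2 by simp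
    ultimately show ?thesis unfolding inner_bdry_def by blast
  qed
  have out: "\<tau> z \<in> outer_bdry M \<eta> c R" if zin: "z \<in> outer_bdry M \<eta> (c + d) R" for z
  proof -
    obtain w where w: "tri_adj z w" "sup_norm2 (?tp w - (c + d)) > 2 * R" "z \<in> ann_sites M \<eta> (c + d) R"
      using zin unfolding outer_bdry_def by blast
    have "tri_adj (\<tau> z) (\<tau> w)" using w(1) adjt by simp
    moreover have "sup_norm2 (?tp (\<tau> w) - c) > 2 * R" unfolding K2 using w(2) by simp
    moreover have "\<tau> z \<in> ann_sites M \<eta> c R" using w(3) M2 by simp
    ultimately show ?thesis unfolding outer_bdry_def by blast
  qed
  have perw: "\<omega> (\<sigma> z) = \<omega> z" for z unfolding \<sigma>_def nc_def nr_def by (rule per)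
  have pathmap: "lattice_path S' (map f \<gamma>)" if "lattice_path S \<gamma>" "\<And>u v. tri_adj u v \<Longrightarrow> tri_adj (f u) (f v)"
     "f ` S \<subseteq> S'" for S S' \<gamma> f
  proof -
    have a: "\<gamma> \<noteq> []" "set \<gamma> \<subseteq> S" "\<And>i. Suc i < length \<gamma> \<Longrightarrow> tri_adj (\<gamma> ! i) (\<gamma> ! Suc i)"
      using that(1) unfolding lattice_path_def by auto
    have "set (map f \<gamma>) \<subseteq> S'" using a(2) that(3) by auto
    moreover have "tri_adj (map f \<gamma> ! i) (map f \<gamma> ! Suc i)" if "Suc i < length (map f \<gamma>)" for i
      using that a(3)[of i] \<open>\<And>u v. tri_adj u v \<Longrightarrow> tri_adj (f u) (f v)\<close> by simp
    ultimately show ?thesis using a(1) unfolding lattice_path_def by simp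
  qed
  obtain N C y where N: "N \<ge> 1" and
    cl: "\<And>i. i < N \<Longrightarrow> is_cluster (ann_sites M \<eta> c R) \<omega> (C i) \<and>
              diameter (?tp ` C i) \<ge> \<delta> * R \<and> \<not> \<omega> (y i) \<and>
              (\<exists>u\<in>C i. tri_adj u (y i)) \<and> (\<exists>u\<in>C (Suc i mod N). tri_adj u (y i))"
    and sep: "separates M \<eta> c R (\<Union>i<N. C i \<union> {y i})"
    using ev unfolding ring_event_def by blast
  have clus: "is_cluster (ann_sites M \<eta> (c + d) R) \<omega> (\<sigma> ` C')" if c: "is_cluster (ann_sites M \<eta> c R) \<omega> C'" for C'
  proof -
    have c1: "C' \<noteq> {}" "C' \<subseteq> ann_sites M \<eta> c R" "\<forall>z\<in>C'. \<omega> z"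
      and c2: "\<forall>u\<in>C'. \<forall>v\<in>C'. \<exists>\<gamma>. lattice_path C' \<gamma> \<and> hd \<gamma> = u \<and> last \<gamma> = v"
      and c3: "\<forall>u\<in>C'. \<forall>v\<in>ann_sites M \<eta> c R. \<omega> v \<and> tri_adj u v \<longrightarrow> v \<in> C'"
      using c unfolding is_cluster_def by blast+
    have "\<forall>u\<in>\<sigma> ` C'. \<forall>v\<in>\<sigma> ` C'. \<exists>\<gamma>. lattice_path (\<sigma> ` C') \<gamma> \<and> hd \<gamma> = u \<and> last \<gamma> = v"
    proof (intro ballI)
      fix u' v' assume "u' \<in> \<sigma> ` C'" "v' \<in> \<sigma> ` C'"
      then obtain u v where uv: "u \<in> C'" "v \<in> C'" "u' = \<sigma> u" "v' = \<sigma> v" by blast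
      obtain \<gamma> where g: "lattice_path C' \<gamma>" "hd \<gamma> = u" "last \<gamma> = v" using c2 uv by blast
      have ne: "\<gamma> \<noteq> []" using g unfolding lattice_path_def by auto
      show "\<exists>\<gamma>. lattice_path (\<sigma> ` C') \<gamma> \<and> hd \<gamma> = u' \<and> last \<gamma> = v'"
      proof (intro exI conjI)
        show "lattice_path (\<sigma> ` C') (map \<sigma> \<gamma>)" using pathmap[OF g(1), of \<sigma>] adjs by simp
        show "hd (map \<sigma> \<gamma>) = u'" using g ne uv by (simp add: hd_map)
        show "last (map \<sigma> \<gamma>) = v'" using g ne uv by (simp add: last_map)
      qed
    qed
    moreover have "\<forall>u\<in>\<sigma> ` C'. \<forall>v\<in>ann_sites M \<eta> (c + d) R. \<omega> v \<and> tri_adj u v \<longrightarrow> v \<in> \<sigma> ` C'"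
    proof (intro ballI impI)
      fix u' v' assume u': "u' \<in> \<sigma> ` C'" and v': "v' \<in> ann_sites M \<eta> (c + d) R" and o: "\<omega> v' \<and> tri_adj u' v'"
      obtain u where u: "u \<in> C'" "u' = \<sigma> u" using u' by blast
      have "\<tau> v' \<in> ann_sites M \<eta> c R" using M2 v' by simp
      moreover have "\<omega> (\<tau> v')" using o perw[of "\<tau> v'"] st by simp
      moreover have "tri_adj u (\<tau> v')" using o u adjs[of u "\<tau> v'"] st by simp
      ultimately have "\<tau> v' \<in> C'" using c3 u by blast
      then show "v' \<in> \<sigma> ` C'" using st by (metis image_eqI)
    qed
    ultimately show ?thesis using c1 M1 perw unfolding is_cluster_def by auto
  qed
  have "\<forall>i<N. is_cluster (ann_sites M \<eta> (c + d) R) \<omega> (\<sigma> ` C i) \<and>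
              diameter (?tp ` (\<sigma> ` C i)) \<ge> \<delta> * R \<and> \<not> \<omega> (\<sigma> (y i)) \<and>
              (\<exists>u\<in>\<sigma> ` C i. tri_adj u (\<sigma> (y i))) \<and> (\<exists>u\<in>\<sigma> ` C (Suc i mod N). tri_adj u (\<sigma> (y i)))"
  proof (intro allI impI conjI)
    fix i assume i: "i < N"
    note c = cl[OF i]
    show "is_cluster (ann_sites M \<eta> (c + d) R) \<omega> (\<sigma> ` C i)" using c clus by blast
    have "?tp ` (\<sigma> ` C i) = (\<lambda>x. x + d) ` (?tp ` C i)" by (auto simp: image_image tps)
    then show "diameter (?tp ` (\<sigma> ` C i)) \<ge> \<delta> * R" using c diameter_translate by metis
    show "\<not> \<omega> (\<sigma> (y i))" using c perw by simp
    show "\<exists>u\<in>\<sigma> ` C i. tri_adj u (\<sigma> (y i))" using c adjs by blast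
    show "\<exists>u\<in>\<sigma> ` C (Suc i mod N). tri_adj u (\<sigma> (y i))" using c adjs by blast
  qed
  moreover have "separates M \<eta> (c + d) R (\<Union>i<N. \<sigma> ` C i \<union> {\<sigma> (y i)})"
    unfolding separates_def
  proof
    assume "\<exists>\<gamma>. lattice_path (ann_sites M \<eta> (c + d) R - (\<Union>i<N. \<sigma> ` C i \<union> {\<sigma> (y i)})) \<gamma> \<and>
            hd \<gamma> \<in> inner_bdry M \<eta> (c + d) R \<and> last \<gamma> \<in> outer_bdry M \<eta> (c + d) R"
    then obtain \<gamma> where g: "lattice_path (ann_sites M \<eta> (c + d) R - (\<Union>i<N. \<sigma> ` C i \<union> {\<sigma> (y i)})) \<gamma>"
       "hd \<gamma> \<in> inner_bdry M \<eta> (c + d) R" "last \<gamma> \<in> outer_bdry M \<eta> (c + d) R" by blast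
    have ne: "\<gamma> \<noteq> []" using g unfolding lattice_path_def by auto
    have sub: "\<tau> ` (ann_sites M \<eta> (c + d) R - (\<Union>i<N. \<sigma> ` C i \<union> {\<sigma> (y i)})) \<subseteq>
               ann_sites M \<eta> c R - (\<Union>i<N. C i \<union> {y i})"
    proof
      fix z assume "z \<in> \<tau> ` (ann_sites M \<eta> (c + d) R - (\<Union>i<N. \<sigma> ` C i \<union> {\<sigma> (y i)}))"
      then obtain z' where z': "z = \<tau> z'" "z' \<in> ann_sites M \<eta> (c + d) R" "z' \<notin> (\<Union>i<N. \<sigma> ` C i \<union> {\<sigma> (y i)})" by blast
      have "z \<in> ann_sites M \<eta> c R" using z' M2 by simp
      moreover have "z \<notin> (\<Union>i<N. C i \<union> {y i})"
      proof
        assume "z \<in> (\<Union>i<N. C i \<union> {y i})"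
        then have "\<sigma> z \<in> (\<Union>i<N. \<sigma> ` C i \<union> {\<sigma> (y i)})" by blast
        then show False using z' st by simp
      qed
      ultimately show "z \<in> ann_sites M \<eta> c R - (\<Union>i<N. C i \<union> {y i})" by blast
    qed
    have "lattice_path (ann_sites M \<eta> c R - (\<Union>i<N. C i \<union> {y i})) (map \<tau> \<gamma>)"
      using pathmap[OF g(1), of \<tau>] adjt sub by simp
    moreover have "hd (map \<tau> \<gamma>) \<in> inner_bdry M \<eta> c R" using inn g ne by (simp add: hd_map)
    moreover have "last (map \<tau> \<gamma>) \<in> outer_bdry M \<eta> c R" using out g ne by (simp add: last_map)
    ultimately show False using sep unfolding separates_def by blast
  qed
  ultimately show ?thesis using N unfolding ring_event_def d_def[symmetric] mem_Collect_eq
    by (intro exI[of _ N] exI[of _ "\<lambda>i. \<sigma> ` C i"] exI[of _ "\<lambda>i. \<sigma> (y i)"]) simp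
qed



definition liftw :: "real \<Rightarrow> real \<Rightarrow> (site \<Rightarrow> bool) \<Rightarrow> site \<Rightarrow> bool" where
  "liftw M \<eta> w z = w (fst z mod n_cols M \<eta>, snd z mod n_rows M \<eta>)"

definition Qp :: "real \<Rightarrow> real \<Rightarrow> real \<Rightarrow> (site \<Rightarrow> bool) pmf" where
  "Qp M lam \<eta> = Pi_pmf ({0..<n_cols M \<eta>} \<times> {0..<n_rows M \<eta>}) False
          (\<lambda>_. bernoulli_pmf (near_crit_density lam \<eta>))"

lemma perc_eq: "perc M lam \<eta> = map_pmf (liftw M \<eta>) (Qp M lam \<eta>)"
  unfolding perc_def Qp_def liftw_def[abs_def] by simp

lemma eta_facts:
  assumes "M > 0" "\<eta> > 0"
  shows "n_cols M \<eta> > 0" "n_rows M \<eta> > 0" "2 * M / n_cols M \<eta> \<le> \<eta>" "2 * M / n_rows M \<eta> \<le> \<eta>"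
proof -
  have p1: "2 * M / \<eta> > 0" using assms by simp
  have p2: "2 * M / (\<eta> * sqrt 3) > 0" using assms by simp
  have c1: "real_of_int (n_cols M \<eta>) \<ge> 2 * M / \<eta>" unfolding n_cols_def by linarith
  have c2: "real_of_int (n_rows M \<eta>) \<ge> 2 * (2 * M / (\<eta> * sqrt 3))" unfolding n_rows_def by linarith
  show g1: "n_cols M \<eta> > 0" using p1 c1 by linarith
  show g2: "n_rows M \<eta> > 0" using p2 c2 by linarith
  show "2 * M / n_cols M \<eta> \<le> \<eta>"
    using c1 p1 assms g1 by (simp add: divide_le_eq field_simps)
  have s3: "sqrt 3 \<le> 2" by (simp add: real_sqrt_le_iff[of 3 4, simplified])
  have "2 * M / \<eta> \<le> 2 * (2 * M / (\<eta> * sqrt 3))"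
    using assms s3 by (simp add: field_simps)
  then have c3: "real_of_int (n_rows M \<eta>) \<ge> 2 * M / \<eta>" using c2 by linarith
  show "2 * M / n_rows M \<eta> \<le> \<eta>"
    using c3 p1 assms g2 by (simp add: divide_le_eq field_simps)
qed

lemma liftw_per: "liftw M \<eta> w (fst z + n_cols M \<eta> * p, snd z + n_rows M \<eta> * q) = liftw M \<eta> w z"
  unfolding liftw_def by simp

lemma bad_bound:
  fixes k :: nat
  assumes M: "M > 0" and eta: "\<eta> > 0" "\<eta> < R0" and big: "R0 * 4 ^ k \<le> M"
    and hyp: "\<And>j. j < k \<Longrightarrow> measure_pmf.prob (perc M lam \<eta>) (ring_event M \<eta> c (R0 * 4 ^ j) \<delta>) > 99/100"
  shows "measure_pmf.prob (Qp M lam \<eta>) {w. \<forall>j<k. liftw M \<eta> w \<notin> ring_event M \<eta> c (R0 * 4 ^ j) \<delta>} \<le> (1/100) ^ k"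
proof -
  define nc where "nc = n_cols M \<eta>"
  define nr where "nr = n_rows M \<eta>"
  let ?tp = "torus_pos M \<eta>"
  note ef = eta_facts[OF M eta(1)]
  have nc: "nc > 0" "nr > 0" using ef nc_def nr_def by auto
  define S where "S j = {z. R0 * 4 ^ j - \<eta> \<le> sup_norm2 (?tp z - c) \<and> sup_norm2 (?tp z - c) \<le> 2 * (R0 * 4 ^ j) + \<eta>}" for j :: nat
  define res where "res z = (fst z mod nc, snd z mod nr)" for z :: site
  define D where "D j = res ` S j" for j
  define T where "T = {0..<nc} \<times> {0..<nr}"
  define E where "E j = ring_event M \<eta> c (R0 * 4 ^ j) \<delta>" for j :: nat
  have R0: "R0 > 0" using eta by simp
  have lw: "liftw M \<eta> w z = w (res z)" for w z unfolding liftw_def res_def nc_def nr_def by simp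
  have Sdisj: "S i \<inter> S j = {}" if "i < j" for i j
  proof -
    have "(4::real) ^ (Suc i) \<le> 4 ^ j" using that by (intro power_increasing) auto
    then have "R0 * 4 ^ j \<ge> 4 * (R0 * 4 ^ i)" using R0 by (simp add: mult_left_mono)
    moreover have "R0 * 4 ^ i \<ge> R0" using R0 by simp
    ultimately have h: "R0 * 4 ^ j \<ge> 4 * (R0 * 4 ^ i)" "R0 * 4 ^ i \<ge> R0" .
    show ?thesis
    proof (rule ccontr)
      assume "S i \<inter> S j \<noteq> {}"
      then obtain z where "z \<in> S i" "z \<in> S j" by auto
      then have "R0 * 4 ^ j - \<eta> \<le> sup_norm2 (?tp z - c)" "sup_norm2 (?tp z - c) \<le> 2 * (R0 * 4 ^ i) + \<eta>"
        unfolding S_def by auto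
      then show False using h eta by linarith
    qed
  qed
  have Rle: "2 * (R0 * 4 ^ i) \<le> M / 2" if "i < k" for i
  proof -
    have "(4::real) ^ (Suc i) \<le> 4 ^ k" using that by (intro power_increasing) auto
    then have "R0 * 4 ^ k \<ge> 4 * (R0 * 4 ^ i)" using R0 by (simp add: mult_left_mono)
    then show ?thesis using big by simp
  qed
  have R0le: "R0 \<le> M / 4" if "i < k" for i :: nat
  proof -
    have "(4::real) ^ 1 \<le> 4 ^ k" using that by (intro power_increasing) auto
    then have "R0 * 4 ^ k \<ge> 4 * R0" using R0 by (simp add: mult_left_mono)
    then show ?thesis using big by simp
  qed
  have resinj: "z = z'" if "z \<in> S i" "z' \<in> S j" "i < k" "j < k" "res z = res z'" for z z' i j
  proof -
    define p where "p = fst z div nc - fst z' div nc"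
    define q where "q = snd z div nr - snd z' div nr"
    have m1: "fst z mod nc = fst z' mod nc" "snd z mod nr = snd z' mod nr" using that(5) unfolding res_def by auto
    have "fst z = fst z' + nc * p"
    proof -
      have a1: "fst z = fst z div nc * nc + fst z mod nc" and a2: "fst z' = fst z' div nc * nc + fst z' mod nc" by simp_all
      show ?thesis unfolding p_def right_diff_distrib by (smt (verit) a1 a2 m1 mult.commute)
    qed
    moreover have "snd z = snd z' + nr * q"
    proof -
      have a1: "snd z = snd z div nr * nr + snd z mod nr" and a2: "snd z' = snd z' div nr * nr + snd z' mod nr" by simp_all
      show ?thesis unfolding q_def right_diff_distrib by (smt (verit) a1 a2 m1 mult.commute)
    qed
    ultimately have zz: "z = (fst z' + nc * p, snd z' + nr * q)" by (simp add: prod_eq_iff)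
    have tpz: "?tp z = ?tp z' + (2 * M * of_int p, 2 * M * of_int q)"
      using tp_shift[of M \<eta> z' p q] nc unfolding nc_def nr_def by (subst zz) (simp add: nc_def nr_def)
    have "sup_norm2 (?tp z - ?tp z') \<le> sup_norm2 (?tp z - c) + sup_norm2 (c - ?tp z')"
      using sup_norm2_triangle[of "?tp z - c" "c - ?tp z'"] by simp
    also have "\<dots> = sup_norm2 (?tp z - c) + sup_norm2 (?tp z' - c)" using sup_norm2_minus by metis
    also have "\<dots> \<le> (2 * (R0 * 4 ^ i) + \<eta>) + (2 * (R0 * 4 ^ j) + \<eta>)"
      using that(1,2) unfolding S_def by (intro add_mono) auto
    also have "\<dots> < 2 * M" using Rle[OF that(3)] Rle[OF that(4)] R0le[OF that(3)] eta by linarith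
    finally have "sup_norm2 (2 * M * of_int p, 2 * M * of_int q) < 2 * M" using tpz by simp
    then have "\<bar>2 * M * of_int p\<bar> < 2 * M" "\<bar>2 * M * of_int q\<bar> < 2 * M" unfolding sup_norm2_def by auto
    then have "\<bar>real_of_int p\<bar> < 1" "\<bar>real_of_int q\<bar> < 1" using M by (auto simp: abs_mult)
    then have "p = 0" "q = 0" by linarith+
    then show ?thesis using zz by simp
  qed
  have prodeq: "measure_pmf.prob (Qp M lam \<eta>) {w. \<forall>j<k. liftw M \<eta> w \<notin> E j} =
      (\<Prod>j<k. measure_pmf.prob (Qp M lam \<eta>) {w. liftw M \<eta> w \<notin> E j})"
    unfolding Qp_def nc_def[symmetric] nr_def[symmetric]
  proof (rule indep_Pi_pmf[where D = D])
    show "finite ({0..<nc} \<times> {0..<nr})" by simp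
    show "D j \<subseteq> {0..<nc} \<times> {0..<nr}" for j unfolding D_def res_def using nc by auto
    show "D i \<inter> D j = {}" if "i < k" "j < k" "i \<noteq> j" for i j
    proof (rule ccontr)
      assume "D i \<inter> D j \<noteq> {}"
      then obtain x where "x \<in> D i" "x \<in> D j" by blast
      then obtain z z' where z: "z \<in> S i" "z' \<in> S j" "res z = res z'" unfolding D_def by (metis imageE)
      then have "z = z'" using resinj that by blast
      then have "z \<in> S i \<inter> S j" using z by simp
      then show False
      proof (cases "i < j")
        case True then show False using Sdisj[of i j] \<open>z \<in> S i \<inter> S j\<close> by blast
      next
        case False then have "j < i" using that(3) by simp
        then show False using Sdisj[of j i] \<open>z \<in> S i \<inter> S j\<close> by blast
      qed
    qed
    show "(liftw M \<eta> w \<notin> E j) = (liftw M \<eta> w' \<notin> E j)" if "j < k" "\<forall>z\<in>D j. w z = w' z" for j w w'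
    proof -
      have ag: "liftw M \<eta> w z = liftw M \<eta> w' z" if "z \<in> S j" for z
        using that \<open>\<forall>z\<in>D j. w z = w' z\<close> unfolding lw D_def by auto
      have ag': "\<And>z. R0 * 4 ^ j - \<eta> \<le> sup_norm2 (?tp z - c) \<Longrightarrow> sup_norm2 (?tp z - c) \<le> 2 * (R0 * 4 ^ j) + \<eta> \<Longrightarrow>
           liftw M \<eta> w z = liftw M \<eta> w' z" using ag unfolding S_def by auto
      have ag'': "\<And>z. R0 * 4 ^ j - \<eta> \<le> sup_norm2 (?tp z - c) \<Longrightarrow> sup_norm2 (?tp z - c) \<le> 2 * (R0 * 4 ^ j) + \<eta> \<Longrightarrow>
           liftw M \<eta> w' z = liftw M \<eta> w z" using ag' by metis
      have i1: "liftw M \<eta> w' \<in> E j" if "liftw M \<eta> w \<in> E j"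
        using ring_local[where \<omega>="liftw M \<eta> w" and \<omega>'="liftw M \<eta> w'" and R="R0 * 4 ^ j" and c=c, OF ef(1,2) M ef(3,4) ag'] that unfolding E_def by blast
      have i2: "liftw M \<eta> w \<in> E j" if "liftw M \<eta> w' \<in> E j"
        using ring_local[where \<omega>="liftw M \<eta> w'" and \<omega>'="liftw M \<eta> w" and R="R0 * 4 ^ j" and c=c, OF ef(1,2) M ef(3,4) ag''] that unfolding E_def by blast
      show ?thesis using i1 i2 by blast
    qed
  qed
  have fac: "measure_pmf.prob (Qp M lam \<eta>) {w. liftw M \<eta> w \<notin> E j} \<le> 1/100" if "j < k" for j
  proof -
    have "{w. liftw M \<eta> w \<notin> E j} = UNIV - liftw M \<eta> -` E j" by auto
    then have "measure_pmf.prob (Qp M lam \<eta>) {w. liftw M \<eta> w \<notin> E j} = 1 - measure_pmf.prob (Qp M lam \<eta>) (liftw M \<eta> -` E j)"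
      using measure_pmf.prob_compl[of "liftw M \<eta> -` E j" "Qp M lam \<eta>"] by simp
    also have "measure_pmf.prob (Qp M lam \<eta>) (liftw M \<eta> -` E j) = measure_pmf.prob (perc M lam \<eta>) (E j)"
      unfolding perc_eq by simp
    finally show ?thesis using hyp[OF that] unfolding E_def by simp
  qed
  have "(\<Prod>j<k. measure_pmf.prob (Qp M lam \<eta>) {w. liftw M \<eta> w \<notin> E j}) \<le> (\<Prod>j<k. 1/100)"
    using fac by (intro prod_mono) auto
  then show ?thesis using prodeq unfolding E_def by simp
qed

lemma coord:
  fixes t M s :: real
  assumes M: "M > 0" and s: "s > 0"
  shows "\<exists>p::int. \<exists>a::nat. a < nat \<lceil>2 * M / s\<rceil> \<and> \<bar>t - 2 * M * of_int p - (- M + real a * s + s / 2)\<bar> < s"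
proof -
  define p where "p = \<lfloor>(t + M) / (2 * M)\<rfloor>"
  have p1: "real_of_int p \<le> (t + M) / (2 * M)" "(t + M) / (2 * M) < real_of_int p + 1"
    unfolding p_def by linarith+
  define x1 where "x1 = t - 2 * M * of_int p"
  have x1: "0 \<le> x1 + M" "x1 + M < 2 * M"
    using p1 M unfolding x1_def by (simp_all add: field_simps)
  define ai where "ai = \<lfloor>(x1 + M) / s\<rfloor>"
  have ai0: "ai \<ge> 0" unfolding ai_def using x1 s by simp
  have a1: "real_of_int ai \<le> (x1 + M) / s" "(x1 + M) / s < real_of_int ai + 1" unfolding ai_def by linarith+
  have "(x1 + M) / s < 2 * M / s" using x1 s by (simp add: divide_strict_right_mono)
  then have "real_of_int ai < real_of_int \<lceil>2 * M / s\<rceil>" using a1 by linarith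
  then have ailt: "ai < \<lceil>2 * M / s\<rceil>" by linarith
  define a where "a = nat ai"
  have ra: "real a = real_of_int ai" unfolding a_def using ai0 by simp
  have "a < nat \<lceil>2 * M / s\<rceil>" unfolding a_def using ailt ai0 by linarith
  moreover have "real a * s \<le> x1 + M" "x1 + M < real a * s + s"
    using a1 s unfolding ra by (simp_all add: field_simps)
  then have "\<bar>x1 - (- M + real a * s + s / 2)\<bar> < s" using s by (simp add: abs_less_iff)
  ultimately show ?thesis unfolding x1_def by blast
qed

lemma cover:
  fixes k :: nat
  assumes M: "M > 0" and eta: "\<eta> > 0" and s: "s > 0" "s \<le> R0"
    and hw: "\<forall>a<nat \<lceil>2 * M / s\<rceil>. \<forall>b<nat \<lceil>2 * M / s\<rceil>. \<exists>j<k.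
               liftw M \<eta> w \<in> ring_event M \<eta> (- M + real a * s + s / 2, - M + real b * s + s / 2) (R0 * 4 ^ j) \<delta>"
  shows "\<exists>c R. R0 \<le> R \<and> R \<le> R0 * 4 ^ k \<and> surrounds c R x \<and> liftw M \<eta> w \<in> ring_event M \<eta> c R \<delta>"
proof -
  obtain p a where pa: "a < nat \<lceil>2 * M / s\<rceil>" "\<bar>fst x - 2 * M * of_int p - (- M + real a * s + s / 2)\<bar> < s"
    using coord[OF M s(1), of "fst x"] by blast
  obtain q b where qb: "b < nat \<lceil>2 * M / s\<rceil>" "\<bar>snd x - 2 * M * of_int q - (- M + real b * s + s / 2)\<bar> < s"
    using coord[OF M s(1), of "snd x"] by blast
  define g where "g = (- M + real a * s + s / 2, - M + real b * s + s / 2)"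
  obtain j where j: "j < k" "liftw M \<eta> w \<in> ring_event M \<eta> g (R0 * 4 ^ j) \<delta>"
    using hw pa(1) qb(1) unfolding g_def by blast
  note ef = eta_facts[OF M eta]
  have ev: "liftw M \<eta> w \<in> ring_event M \<eta> (g + (2 * M * of_int p, 2 * M * of_int q)) (R0 * 4 ^ j) \<delta>"
    using ring_shift[of M \<eta> "liftw M \<eta> w" p q g "R0 * 4 ^ j" \<delta>] ef(1,2) liftw_per j(2) by simp
  have R0: "R0 > 0" using s by simp
  have "R0 * 1 \<le> R0 * 4 ^ j" using R0 by (intro mult_left_mono) auto
  moreover have "R0 * 4 ^ j \<le> R0 * 4 ^ k" using R0 j(1) by (intro mult_left_mono power_increasing) auto
  moreover have "surrounds (g + (2 * M * of_int p, 2 * M * of_int q)) (R0 * 4 ^ j) x"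
  proof -
    have "sup_norm2 (x - (g + (2 * M * of_int p, 2 * M * of_int q))) < s"
      using pa(2) qb(2) unfolding sup_norm2_def g_def by (simp add: algebra_simps)
    moreover have "R0 \<le> R0 * 4 ^ j" using R0 by simp
    ultimately show ?thesis unfolding surrounds_def using s by linarith
  qed
  ultimately show ?thesis using ev by (intro exI[of _ "g + (2 * M * of_int p, 2 * M * of_int q)"] exI[of _ "R0 * 4 ^ j"]) simp
qed

lemma fixed_eta:
  fixes k :: nat
  assumes M: "M > 0" and eta: "\<eta> > 0" "\<eta> < R0" and big: "R0 * 4 ^ k \<le> M"
    and hyp: "\<And>a b j. a < nat \<lceil>2 * M / R0\<rceil> \<Longrightarrow> b < nat \<lceil>2 * M / R0\<rceil> \<Longrightarrow> j < k \<Longrightarrow>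
       measure_pmf.prob (perc M lam \<eta>) (ring_event M \<eta> (- M + real a * R0 + R0 / 2, - M + real b * R0 + R0 / 2) (R0 * 4 ^ j) \<delta>) > 99/100"
  shows "measure_pmf.prob (perc M lam \<eta>) {\<omega>. \<forall>x. \<exists>c R. R0 \<le> R \<and> R \<le> R0 * 4 ^ k \<and> surrounds c R x \<and> \<omega> \<in> ring_event M \<eta> c R \<delta>}
         \<ge> 1 - real (nat \<lceil>2 * M / R0\<rceil>) ^ 2 * (1/100) ^ k"
proof -
  define n where "n = nat \<lceil>2 * M / R0\<rceil>"
  define F where "F = {\<omega>. \<forall>x. \<exists>c R. R0 \<le> R \<and> R \<le> R0 * 4 ^ k \<and> surrounds c R x \<and> \<omega> \<in> ring_event M \<eta> c R \<delta>}"
  define gp where "gp = (\<lambda>(a::nat,b::nat). (- M + real a * R0 + R0 / 2, - M + real b * R0 + R0 / 2))"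
  define Bad where "Bad g = {w. \<forall>j<k. liftw M \<eta> w \<notin> ring_event M \<eta> (gp g) (R0 * 4 ^ j) \<delta>}" for g
  define G where "G = {..<n} \<times> {..<n}"
  let ?Q = "Qp M lam \<eta>"
  have R0: "R0 > 0" using eta by simp
  have sub: "UNIV - liftw M \<eta> -` F \<subseteq> (\<Union>g\<in>G. Bad g)"
  proof
    fix w assume w: "w \<in> UNIV - liftw M \<eta> -` F"
    show "w \<in> (\<Union>g\<in>G. Bad g)"
    proof (rule ccontr)
      assume "w \<notin> (\<Union>g\<in>G. Bad g)"
      then have hw: "\<forall>a<n. \<forall>b<n. \<exists>j<k. liftw M \<eta> w \<in> ring_event M \<eta> (- M + real a * R0 + R0 / 2, - M + real b * R0 + R0 / 2) (R0 * 4 ^ j) \<delta>"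
        unfolding G_def Bad_def gp_def by auto
      have "\<exists>c R. R0 \<le> R \<and> R \<le> R0 * 4 ^ k \<and> surrounds c R x \<and> liftw M \<eta> w \<in> ring_event M \<eta> c R \<delta>" for x
        using cover[OF M eta(1) R0 order_refl hw[unfolded n_def]] by blast
      then have "liftw M \<eta> w \<in> F" unfolding F_def by blast
      then show False using w by blast
    qed
  qed
  have bb: "measure_pmf.prob ?Q (Bad g) \<le> (1/100) ^ k" if gG: "g \<in> G" for g
  proof -
    obtain a b where g: "g = (a, b)" "a < n" "b < n" using gG unfolding G_def by auto
    show ?thesis unfolding Bad_def
      by (rule bad_bound[OF M eta big]) (use hyp g in \<open>auto simp: gp_def n_def\<close>)
  qed
  have "measure_pmf.prob ?Q (UNIV - liftw M \<eta> -` F) \<le> measure_pmf.prob ?Q (\<Union>g\<in>G. Bad g)"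
    using sub by (intro measure_pmf.finite_measure_mono) auto
  also have "\<dots> \<le> (\<Sum>g\<in>G. measure_pmf.prob ?Q (Bad g))"
    by (intro measure_pmf.finite_measure_subadditive_finite) (auto simp: G_def)
  also have "\<dots> \<le> (\<Sum>g\<in>G. (1/100) ^ k)" using bb by (intro sum_mono) auto
  also have "\<dots> = real n ^ 2 * (1/100) ^ k" unfolding G_def by (simp add: power2_eq_square)
  finally have le: "measure_pmf.prob ?Q (UNIV - liftw M \<eta> -` F) \<le> real n ^ 2 * (1/100) ^ k" .
  have "measure_pmf.prob ?Q (UNIV - liftw M \<eta> -` F) = 1 - measure_pmf.prob ?Q (liftw M \<eta> -` F)"
    using measure_pmf.prob_compl[of "liftw M \<eta> -` F" ?Q] by simp
  moreover have "measure_pmf.prob (perc M lam \<eta>) F = measure_pmf.prob ?Q (liftw M \<eta> -` F)"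
    unfolding perc_eq by simp
  ultimately show ?thesis using le unfolding F_def[symmetric] n_def[symmetric] by linarith
qed



theorem mainTheorem7:
  fixes \<delta> M :: real
  assumes delta_pos: "\<delta> > 0"
    and M_pos: "M > 0"
    and local_ring_lemma:
      "\<And>c lam R. lam < -1 \<Longrightarrow> 0 < R \<Longrightarrow> R \<le> \<bar>lam\<bar> powr (-4/3) \<Longrightarrow>
         \<forall>\<^sub>F \<eta> in at_right 0.
           measure_pmf.prob (perc M lam \<eta>) (ring_event M \<eta> c R \<delta>) > 1 - 1/100"
  shows "\<forall>lam < -1. \<forall>\<alpha> > 0. \<exists>r. 0 < r \<and> r < \<delta> / 2 * \<bar>lam\<bar> powr (-4/3) \<and>
           (\<forall>\<^sub>F \<eta> in at_right 0.
              measure_pmf.prob (perc M lam \<eta>)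
                {\<omega>. \<forall>x. \<exists>c R. r / \<delta> \<le> R \<and> R \<le> \<bar>lam\<bar> powr (-4/3) \<and>
                        surrounds c R x \<and> \<omega> \<in> ring_event M \<eta> c R \<delta>}
              \<ge> 1 - \<alpha>)"
proof (intro allI impI)
  fix lam \<alpha> :: real
  assume lam: "lam < -1" and \<alpha>: "\<alpha> > 0"
  define L where "L = \<bar>lam\<bar> powr (-4/3)"
  have L: "L > 0" unfolding L_def using lam by simp
  define m where "m = min L M / 8"
  have m: "m > 0" "m \<le> L / 8" "m \<le> M / 8" unfolding m_def using L M_pos by auto
  define K where "K = (2 * M / m + 1) ^ 2"
  have "2 * M / m > 0" using m M_pos by simp
  then have K: "K > 0" unfolding K_def by simp
  obtain k :: nat where k: "(16/100 :: real) ^ k < \<alpha> / K"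
    using real_arch_pow_inv[of "\<alpha> / K" "16/100"] \<alpha> K by auto
  define R0 where "R0 = m / 4 ^ k"
  have R0: "R0 > 0" unfolding R0_def using m by simp
  have R0k: "R0 * 4 ^ k = m" unfolding R0_def by simp
  have R0m: "R0 \<le> m" unfolding R0_def using m by (simp add: divide_le_eq)
  define r where "r = \<delta> * R0"
  define n where "n = nat \<lceil>2 * M / R0\<rceil>"
  have rd: "r / \<delta> = R0" unfolding r_def using delta_pos by simp
  show "\<exists>r. 0 < r \<and> r < \<delta> / 2 * \<bar>lam\<bar> powr (-4/3) \<and>
           (\<forall>\<^sub>F \<eta> in at_right 0.
              measure_pmf.prob (perc M lam \<eta>)
                {\<omega>. \<forall>x. \<exists>c R. r / \<delta> \<le> R \<and> R \<le> \<bar>lam\<bar> powr (-4/3) \<and>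
                        surrounds c R x \<and> \<omega> \<in> ring_event M \<eta> c R \<delta>}
              \<ge> 1 - \<alpha>)"
  proof (intro exI[of _ r] conjI)
    show "0 < r" unfolding r_def using delta_pos R0 by simp
    show "r < \<delta> / 2 * \<bar>lam\<bar> powr (-4/3)" unfolding r_def L_def[symmetric]
      using delta_pos R0m m L by simp
    define X where "X = ({..<n} \<times> {..<n}) \<times> {..<k}"
    have ev1: "\<forall>\<^sub>F \<eta> in at_right 0. 0 < \<eta> \<and> \<eta> < R0"
      unfolding eventually_at_right_field using R0 by (intro exI[of _ R0]) auto
    have ev2: "\<forall>\<^sub>F \<eta> in at_right 0. \<forall>t\<in>X.
        measure_pmf.prob (perc M lam \<eta>) (ring_event M \<eta> (- M + real (fst (fst t)) * R0 + R0 / 2, - M + real (snd (fst t)) * R0 + R0 / 2) (R0 * 4 ^ snd t) \<delta>) > 1 - 1/100"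
    proof (rule eventually_ball_finite)
      show "finite X" unfolding X_def by simp
      show "\<forall>t\<in>X. \<forall>\<^sub>F \<eta> in at_right 0.
        measure_pmf.prob (perc M lam \<eta>) (ring_event M \<eta> (- M + real (fst (fst t)) * R0 + R0 / 2, - M + real (snd (fst t)) * R0 + R0 / 2) (R0 * 4 ^ snd t) \<delta>) > 1 - 1/100"
      proof
        fix t assume t: "t \<in> X"
        have "R0 * 4 ^ snd t \<le> R0 * 4 ^ k" using t R0 unfolding X_def by (intro mult_left_mono power_increasing) auto
        then have "R0 * 4 ^ snd t \<le> L" using R0k m by linarith
        then show "\<forall>\<^sub>F \<eta> in at_right 0.
        measure_pmf.prob (perc M lam \<eta>) (ring_event M \<eta> (- M + real (fst (fst t)) * R0 + R0 / 2, - M + real (snd (fst t)) * R0 + R0 / 2) (R0 * 4 ^ snd t) \<delta>) > 1 - 1/100"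
          using local_ring_lemma[OF lam] R0 unfolding L_def by simp
      qed
    qed
    show "\<forall>\<^sub>F \<eta> in at_right 0.
              measure_pmf.prob (perc M lam \<eta>)
                {\<omega>. \<forall>x. \<exists>c R. r / \<delta> \<le> R \<and> R \<le> \<bar>lam\<bar> powr (-4/3) \<and>
                        surrounds c R x \<and> \<omega> \<in> ring_event M \<eta> c R \<delta>}
              \<ge> 1 - \<alpha>"
      using ev1 ev2
    proof eventually_elim
      case (elim \<eta>)
      have hyp: "measure_pmf.prob (perc M lam \<eta>) (ring_event M \<eta> (- M + real a * R0 + R0 / 2, - M + real b * R0 + R0 / 2) (R0 * 4 ^ j) \<delta>) > 99/100"
        if "a < nat \<lceil>2 * M / R0\<rceil>" "b < nat \<lceil>2 * M / R0\<rceil>" "j < k" for a b j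
        using elim(2) that unfolding X_def n_def by force
      have big: "R0 * 4 ^ k \<le> M" using R0k m M_pos by linarith
      have fe: "measure_pmf.prob (perc M lam \<eta>) {\<omega>. \<forall>x. \<exists>c R. R0 \<le> R \<and> R \<le> R0 * 4 ^ k \<and> surrounds c R x \<and> \<omega> \<in> ring_event M \<eta> c R \<delta>}
         \<ge> 1 - real n ^ 2 * (1/100) ^ k"
        unfolding n_def by (rule fixed_eta[OF M_pos elim(1)[THEN conjunct1] elim(1)[THEN conjunct2] big hyp])
      have subs: "{\<omega>. \<forall>x. \<exists>c R. R0 \<le> R \<and> R \<le> R0 * 4 ^ k \<and> surrounds c R x \<and> \<omega> \<in> ring_event M \<eta> c R \<delta>} \<subseteq>
        {\<omega>. \<forall>x. \<exists>c R. r / \<delta> \<le> R \<and> R \<le> \<bar>lam\<bar> powr (-4/3) \<and> surrounds c R x \<and> \<omega> \<in> ring_event M \<eta> c R \<delta>}"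
        using R0k m unfolding rd L_def[symmetric] by force
      have mono: "measure_pmf.prob (perc M lam \<eta>) {\<omega>. \<forall>x. \<exists>c R. R0 \<le> R \<and> R \<le> R0 * 4 ^ k \<and> surrounds c R x \<and> \<omega> \<in> ring_event M \<eta> c R \<delta>} \<le>
        measure_pmf.prob (perc M lam \<eta>) {\<omega>. \<forall>x. \<exists>c R. r / \<delta> \<le> R \<and> R \<le> \<bar>lam\<bar> powr (-4/3) \<and> surrounds c R x \<and> \<omega> \<in> ring_event M \<eta> c R \<delta>}"
        using subs by (intro measure_pmf.finite_measure_mono) auto
      have nle: "real n \<le> (2 * M / m + 1) * 4 ^ k"
      proof -
        have "real n = real_of_int \<lceil>2 * M / R0\<rceil>" unfolding n_def using M_pos R0 by simp
        also have "\<dots> \<le> 2 * M / R0 + 1" by linarith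
        also have "2 * M / R0 = 2 * M / m * 4 ^ k" unfolding R0_def by simp
        also have "2 * M / m * 4 ^ k + 1 \<le> (2 * M / m + 1) * 4 ^ k"
          using one_le_power[of "4::real" k] by (simp add: algebra_simps)
        finally show ?thesis .
      qed
      have "real n ^ 2 * (1/100) ^ k \<le> ((2 * M / m + 1) * 4 ^ k) ^ 2 * (1/100) ^ k"
        using nle by (intro mult_right_mono power_mono) auto
      also have "\<dots> = K * (16/100) ^ k"
      proof -
        have "((4::real) ^ k) ^ 2 = 16 ^ k" by (simp add: power_mult[symmetric] mult.commute[of k] power_mult)
        moreover have "(16::real) ^ k * (1/100) ^ k = (16/100) ^ k" by (simp add: power_mult_distrib[symmetric])
        ultimately show ?thesis unfolding K_def power_mult_distrib by (simp add: mult.assoc)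
      qed
      also have "\<dots> < \<alpha>" using k K by (simp add: field_simps)
      finally show ?case using fe mono by linarith
    qed
  qed
qed


end
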